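(* Let $C'=(C'(1),\ldots,C'(c'))$ be a sequence of distinct positive integers and let $S$ be a set of $c$ positive integers, $c\in\{c',c'+1\}$, such that if $s_1<\cdots<s_c$ are the elements of $S$ and $t_1<\cdots<t_{c'}$ are the entries of $C'$ in increasing order, then $s_r\le t_r$ for all $r\le c'$. Then the two-column configuration $(\widehat C,C')$ is HHL.
   Context: A column is a finite sequence of entries listed top to bottom (entry in row $r$ is its $r$-th term). The column $\widehat C=(\widehat C(1),\ldots,\widehat C(c))$ is built from $S$ and $C'$ as follows: every $x\in S\cap C'$ is placed in the row where $x$ occurs in $C'$; if $c=c'+1$, the largest element of $S\setminus C'$ is placed in row $c$; the remaining elements of $S\setminus C'$ (there are exactly $|C'\setminus S|$ of them), taken in decreasing order, are placed in the rows occupied in $C'$ by the elements of $C'\setminus S$ taken in decreasing order (the $k$-th largest next to the $k$-th largest). A two-column configuration $(C,C')$ with left column $C$ of length $c$ and right column $C'$ of length $c'$, $c\in\{c',c'+1\}$, is HHL if the entries of $C$ are distinct, the entries of $C'$ are distinct, $C(j)\ne C'(r)$ whenever $r<j$, and $C(r)\le C'(r)$ for all $r\le c'$. *)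

theory Defs
  imports Main
begin

text \<open>Columns are lists; row r (1-based) of a column is list index r-1 (0-based).\<close>

text \<open>Elements of S not in C' that are used to fill rows of C' occupied by entries of C'\S:
  if c = c'+1 the largest element of S\C' is removed (it goes to the last row).\<close>
definition chat_remaining :: "nat set \<Rightarrow> nat list \<Rightarrow> nat set" where
  "chat_remaining S C' =
     (if card S = length C' + 1 then (S - set C') - {Max (S - set C')} else S - set C')"

text \<open>For x = C'!i not in S, its 0-based rank among C'\S in decreasing order is the number of
  elements of C'\S larger than x; it receives the element of the same rank among the
  remaining elements of S\C' in decreasing order.\<close>
definition chat_entry :: "nat set \<Rightarrow> nat list \<Rightarrow> nat \<Rightarrow> nat" where
  "chat_entry S C' i =
     (if i < length C' then
        (if C' ! i \<in> S then C' ! i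
         else rev (sorted_list_of_set (chat_remaining S C'))
                ! card {y \<in> set C' - S. C' ! i < y})
      else Max (S - set C'))"

definition chat :: "nat set \<Rightarrow> nat list \<Rightarrow> nat list" where
  "chat S C' = map (chat_entry S C') [0..<card S]"

definition HHL :: "nat list \<Rightarrow> nat list \<Rightarrow> bool" where
  "HHL C C' \<longleftrightarrow>
     (length C = length C' \<or> length C = length C' + 1) \<and>
     distinct C \<and> distinct C' \<and>
     (\<forall>r j. r < j \<and> j < length C \<and> r < length C' \<longrightarrow> C ! j \<noteq> C' ! r) \<and>
     (\<forall>r < length C'. C ! r \<le> C' ! r)"

end

theory Submission
  imports Defs
begin

lemma rank_less:
  fixes X :: "nat set" assumes "finite X" "i < card X"
  shows "card {x\<in>X. x < sorted_list_of_set X ! i} = i"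
proof -
  let ?xs = "sorted_list_of_set X"
  have sw: "sorted_wrt (<) ?xs" by simp
  have len: "length ?xs = card X" by simp
  have st: "set ?xs = X" using assms by simp
  have "{x\<in>X. x < ?xs!i} = set (take i ?xs)"
  proof
    show "{x\<in>X. x < ?xs!i} \<subseteq> set (take i ?xs)"
    proof
      fix x assume "x \<in> {x\<in>X. x < ?xs!i}"
      hence x: "x \<in> X" "x < ?xs!i" by auto
      then obtain j where j: "j < length ?xs" "?xs!j = x" using st by (metis in_set_conv_nth)
      have "j < i"
      proof (rule ccontr)
        assume "\<not> j < i"
        hence "i = j \<or> i < j" by auto
        thus False using x j sw assms len unfolding sorted_wrt_iff_nth_less by force
      qed
      thus "x \<in> set (take i ?xs)" using j by (metis in_set_conv_nth length_take min_less_iff_conj nth_take)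
    qed
  next
    show "set (take i ?xs) \<subseteq> {x\<in>X. x < ?xs!i}"
    proof
      fix x assume "x \<in> set (take i ?xs)"
      then obtain j where j: "j < i" "x = ?xs!j" using assms len by (auto simp: in_set_conv_nth)
      thus "x \<in> {x\<in>X. x < ?xs!i}" using sw assms len st unfolding sorted_wrt_iff_nth_less
        by (metis (no_types, lifting) mem_Collect_eq nth_mem order.strict_trans)
    qed
  qed
  moreover have "distinct (take i ?xs)" by simp
  ultimately show ?thesis using assms len by (simp add: distinct_card)
qed

lemma rank_greater:
  fixes X :: "nat set" assumes "finite X" "i < card X"
  shows "card {x\<in>X. sorted_list_of_set X ! i < x} = card X - 1 - i"
proof -
  let ?y = "sorted_list_of_set X ! i"
  have yX: "?y \<in> X" using assms by (metis length_sorted_list_of_set nth_mem set_sorted_list_of_set)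
  have "{x\<in>X. ?y < x} = X - insert ?y {x\<in>X. x < ?y}" by auto
  moreover have "card (insert ?y {x\<in>X. x < ?y}) = i + 1"
    using rank_less[OF assms] assms by (simp add: card_insert_if)
  ultimately show ?thesis using assms yX by (simp add: card_Diff_subset)
qed

lemma rank_rev:
  fixes X :: "nat set" assumes "finite X" "m < card X"
  shows "card {x\<in>X. rev (sorted_list_of_set X) ! m < x} = m"
    "rev (sorted_list_of_set X) ! m \<in> X"
proof -
  have e: "rev (sorted_list_of_set X) ! m = sorted_list_of_set X ! (card X - 1 - m)"
    using assms by (simp add: rev_nth)
  show "card {x\<in>X. rev (sorted_list_of_set X) ! m < x} = m"
    unfolding e using rank_greater[OF assms(1), of "card X - 1 - m"] assms by simp
  show "rev (sorted_list_of_set X) ! m \<in> X" unfolding e using assms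
    by (metis diff_less length_sorted_list_of_set less_imp_diff_less nth_mem set_sorted_list_of_set zero_less_one less_nat_zero_code linorder_neqE_nat)
qed

theorem proposition4p1:
  fixes S :: "nat set" and C' :: "nat list"
  assumes "distinct C'"
    and "\<forall>x \<in> set C'. 0 < x"
    and "finite S"
    and "\<forall>x \<in> S. 0 < x"
    and "card S = length C' \<or> card S = length C' + 1"
    and "\<forall>r < length C'. sorted_list_of_set S ! r \<le> sort C' ! r"
  shows "HHL (chat S C') C'"
proof -
  define c where "c = card S"
  define c' where "c' = length C'"
  define A where "A = S - set C'"
  define B where "B = set C' - S"
  define R where "R = chat_remaining S C'"
  define L where "L = rev (sorted_list_of_set R)"
  define rk where "rk i = card {y\<in>B. C'!i < y}" for i
  have fS: "finite S" by fact
  have fA: "finite A" and fB: "finite B" using assms(3) by (auto simp: A_def B_def)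
  have cc: "c = c' \<or> c = c' + 1" using assms(5) by (simp add: c_def c'_def)
  have cardT: "card (set C') = c'" using assms(1) by (simp add: c'_def distinct_card)
  have cardA: "card (S \<inter> set C') + card A = c"
  proof -
    have "S = (S \<inter> set C') \<union> A" "(S \<inter> set C') \<inter> A = {}" by (auto simp: A_def)
    thus ?thesis using fA assms(3) c_def by (metis card_Un_disjoint finite_Int)
  qed
  have cardB: "card (S \<inter> set C') + card B = c'"
  proof -
    have "set C' = (S \<inter> set C') \<union> B" "(S \<inter> set C') \<inter> B = {}" by (auto simp: B_def)
    thus ?thesis using fB cardT by (metis card_Un_disjoint finite_Int finite_set)
  qed
  have Rc: "c = c' \<Longrightarrow> R = A"
    using cc by (auto simp: R_def chat_remaining_def A_def c_def c'_def)
  have Rc1: "c = c' + 1 \<Longrightarrow> A \<noteq> {} \<and> R = A - {Max A}"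
  proof -
    assume h: "c = c' + 1"
    hence "card A = card B + 1" using cardA cardB by simp
    hence "A \<noteq> {}" by auto
    moreover have "R = A - {Max A}" using h by (simp add: R_def chat_remaining_def A_def c_def c'_def)
    ultimately show ?thesis by simp
  qed
  have fR: "finite R" using Rc Rc1 cc fA by auto
  have RA: "R \<subseteq> A" using Rc Rc1 cc by auto
  have cardR: "card R = card B"
  proof (cases "c = c'")
    case True thus ?thesis using Rc cardA cardB by simp
  next
    case False
    hence h: "c = c' + 1" using cc by simp
    hence "card A = card B + 1" using cardA cardB by simp
    moreover have "Max A \<in> A" using Rc1[OF h] fA by simp
    ultimately show ?thesis using Rc1[OF h] fA by (simp add: card_Diff_singleton)
  qed
  have MaxA: "c = c' + 1 \<Longrightarrow> Max A \<in> A \<and> Max A \<notin> R" using Rc1 fA by auto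
  have rk_lt: "rk i < card R" if "i < c'" "C'!i \<notin> S" for i
  proof -
    have "C'!i \<in> B" using that by (simp add: B_def c'_def)
    hence "{y\<in>B. C'!i < y} \<subset> B" by auto
    thus ?thesis using fB cardR by (simp add: rk_def psubset_card_mono)
  qed
  have Lmem: "L!m \<in> R" if "m < card R" for m
    using rank_rev(2)[OF fR that] by (simp add: L_def)
  have entry: "chat_entry S C' i = L!(rk i)" if "i < c'" "C'!i \<notin> S" for i
    using that by (simp add: chat_entry_def c'_def L_def R_def rk_def B_def)
  have entryS: "chat_entry S C' i = C'!i" if "i < c'" "C'!i \<in> S" for i
    using that by (simp add: chat_entry_def c'_def)
  have entryc: "chat_entry S C' i = Max A" if "c' \<le> i" for i
    using that by (simp add: chat_entry_def c'_def A_def)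
  have len: "length (chat S C') = c" by (simp add: chat_def c_def)
  have nth: "chat S C' ! i = chat_entry S C' i" if "i < c" for i
    using that by (simp add: chat_def c_def)
  have inA: "chat_entry S C' i \<in> A" if "i < c" "\<not> (i < c' \<and> C'!i \<in> S)" for i
  proof (cases "i < c'")
    case True
    thus ?thesis using that entry rk_lt Lmem RA by auto
  next
    case False
    hence "c = c' + 1" using cc that by auto
    thus ?thesis using MaxA entryc False by simp
  qed
  have key: "L!(rk i) \<le> C'!i" if i: "i < c'" "C'!i \<notin> S" for i
  proof (rule ccontr)
    define b where "b = C'!i"
    define m where "m = rk i"
    define v where "v = L!m"
    assume "\<not> L!(rk i) \<le> C'!i"
    hence vb: "b < v" by (simp add: b_def m_def v_def)
    have mR: "m < card R" using rk_lt[OF i] by (simp add: m_def)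
    have vR: "v \<in> R" using Lmem[OF mR] by (simp add: v_def)
    have cv: "card {x\<in>R. v < x} = m" using rank_rev(1)[OF fR mR] by (simp add: v_def L_def)
    have h1: "m + 1 \<le> card {x\<in>R. b < x}"
    proof -
      have "insert v {x\<in>R. v < x} \<subseteq> {x\<in>R. b < x}" using vb vR by auto
      moreover have "card (insert v {x\<in>R. v < x}) = m + 1" using cv fR by (simp add: card_insert_if)
      ultimately show ?thesis using fR by (metis (no_types, lifting) card_mono finite_subset mem_Collect_eq subsetI)
    qed
    have h2: "card {x\<in>S. b < x} + c' \<le> card {x\<in>set C'. b < x} + c"
    proof -
      have bT: "b \<in> set C'" using i by (simp add: b_def c'_def)
      have sC: "sort C' = sorted_list_of_set (set C')"
        using assms(1) by (simp add: sorted_list_of_set_sort_remdups distinct_remdups_id)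
      obtain p where p: "p < c'" "sorted_list_of_set (set C') ! p = b"
        using bT cardT by (metis in_set_conv_nth length_sorted_list_of_set set_sorted_list_of_set finite_set)
      have gT: "card {x\<in>set C'. b < x} = c' - 1 - p"
        using rank_greater[of "set C'" p] p cardT by simp
      define s where "s = sorted_list_of_set S ! p"
      have sb: "s \<le> b" using assms(6) p sC unfolding s_def c'_def by metis
      have pS: "p < card S" using p cc c_def by auto
      have sS: "s \<in> S" using pS fS
        by (metis length_sorted_list_of_set nth_mem set_sorted_list_of_set s_def)
      have "insert s {x\<in>S. x < s} \<subseteq> {x\<in>S. x \<le> b}" using sb sS by auto
      moreover have "card (insert s {x\<in>S. x < s}) = p + 1"
        using rank_less[OF fS pS] fS by (simp add: card_insert_if s_def)
      ultimately have le: "p + 1 \<le> card {x\<in>S. x \<le> b}" using fS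
        by (metis (no_types, lifting) card_mono finite_subset mem_Collect_eq subsetI)
      have "{x\<in>S. b < x} = S - {x\<in>S. x \<le> b}" by auto
      hence "card {x\<in>S. b < x} = c - card {x\<in>S. x \<le> b}"
        using fS by (simp add: card_Diff_subset c_def)
      thus ?thesis using le gT p pS c_def by linarith
    qed
    have h3: "card {x\<in>S. b < x} = card {x\<in>S \<inter> set C'. b < x} + card {x\<in>A. b < x}"
    proof -
      have "{x\<in>S. b < x} = {x\<in>S \<inter> set C'. b < x} \<union> {x\<in>A. b < x}"
        "{x\<in>S \<inter> set C'. b < x} \<inter> {x\<in>A. b < x} = {}" by (auto simp: A_def)
      thus ?thesis using fS fA by (simp add: card_Un_disjoint)
    qed
    have h4: "card {x\<in>set C'. b < x} = card {x\<in>S \<inter> set C'. b < x} + m"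
    proof -
      have "{x\<in>set C'. b < x} = {x\<in>S \<inter> set C'. b < x} \<union> {x\<in>B. b < x}"
        "{x\<in>S \<inter> set C'. b < x} \<inter> {x\<in>B. b < x} = {}" by (auto simp: B_def)
      moreover have "finite {x\<in>S \<inter> set C'. b < x}" using fS by simp
      moreover have "finite {x\<in>B. b < x}" using fB by simp
      ultimately show ?thesis unfolding m_def rk_def b_def by (metis card_Un_disjoint)
    qed
    have h5: "card {x\<in>A. b < x} + c' \<le> m + c" using h2 h3 h4 by linarith
    show False
    proof (cases "c = c'")
      case True thus ?thesis using Rc h1 h5 by simp
    next
      case False
      hence h: "c = c' + 1" using cc by simp
      have "v \<le> Max A" using vR RA fA by auto
      hence "insert (Max A) {x\<in>R. b < x} \<subseteq> {x\<in>A. b < x}" using MaxA[OF h] RA vb by auto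
      moreover have "card (insert (Max A) {x\<in>R. b < x}) = card {x\<in>R. b < x} + 1"
        using MaxA[OF h] fR by simp
      ultimately have "card {x\<in>R. b < x} + 1 \<le> card {x\<in>A. b < x}" using fA
        by (metis (no_types, lifting) card_mono finite_subset mem_Collect_eq subsetI)
      thus ?thesis using h1 h5 h by linarith
    qed
  qed
  have AnT: "x \<in> A \<Longrightarrow> x \<notin> set C'" for x by (simp add: A_def)
  have P1: "length (chat S C') = length C' \<or> length (chat S C') = length C' + 1"
    using len cc c'_def by simp
  have P2: "distinct (chat S C')"
  proof -
    have "inj_on (chat_entry S C') {0..<c}"
    proof (rule inj_onI)
      fix i j assume ij: "i \<in> {0..<c}" "j \<in> {0..<c}" and e: "chat_entry S C' i = chat_entry S C' j"
      show "i = j"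
      proof (rule ccontr)
        assume ne: "i \<noteq> j"
        consider (a) "i < c' \<and> C'!i \<in> S" | (b) "\<not> (i < c' \<and> C'!i \<in> S)" by blast
        then show False
        proof cases
          case a
          show False
          proof (cases "j < c' \<and> C'!j \<in> S")
            case True
            thus False using a e ne entryS assms(1) by (simp add: c'_def nth_eq_iff_index_eq)
          next
            case False
            hence "chat_entry S C' j \<in> A" using inA[of j] ij by simp
            moreover have "chat_entry S C' i \<in> set C'" using a entryS by (simp add: c'_def)
            ultimately show False using e AnT by simp
          qed
        next
          case b
          show False
          proof (cases "j < c' \<and> C'!j \<in> S")
            case True
            hence "chat_entry S C' j \<in> set C'" using entryS by (simp add: c'_def)
            moreover have "chat_entry S C' i \<in> A" using inA[of i] ij b by simp
            ultimately show False using e AnT by simp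
          next
            case False
            show False
            proof (cases "i < c' \<and> j < c'")
              case True
              hence ni: "C'!i \<notin> S" "C'!j \<notin> S" using b False by auto
              have nij: "C'!i \<noteq> C'!j" using True ne assms(1) by (simp add: c'_def nth_eq_iff_index_eq)
              have rne: "rk i \<noteq> rk j"
              proof -
                have s: "rk y < rk x" if "x < c'" "y < c'" "C'!x \<notin> S" "C'!y \<notin> S" "C'!x < C'!y" for x y
                proof -
                  have sub: "{z\<in>B. C'!y < z} \<subseteq> {z\<in>B. C'!x < z}" using that(5) by auto
                  have mem: "C'!y \<in> {z\<in>B. C'!x < z}" using that(2,4,5) by (simp add: B_def c'_def)
                  have nm: "C'!y \<notin> {z\<in>B. C'!y < z}" by simp
                  have ps: "{z\<in>B. C'!y < z} \<subset> {z\<in>B. C'!x < z}" using sub mem nm by blast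
                  have "finite {z\<in>B. C'!x < z}" using fB by simp
                  from psubset_card_mono[OF this ps] show ?thesis by (simp add: rk_def)
                qed
                have t1: "i < c'" and t2: "j < c'" using True by auto
                show ?thesis
                proof
                  assume eq: "rk i = rk j"
                  from nij have "C'!i < C'!j \<or> C'!j < C'!i" by arith
                  moreover have "\<not> C'!i < C'!j" using s[OF t1 t2 ni(1) ni(2)] eq by linarith
                  moreover have "\<not> C'!j < C'!i" using s[OF t2 t1 ni(2) ni(1)] eq by linarith
                  ultimately show False by blast
                qed
              qed
              have dL: "distinct L" by (simp add: L_def)
              have lL: "length L = card R" by (simp add: L_def)
              have "L!(rk i) \<noteq> L!(rk j)"
                using rne rk_lt[of i] rk_lt[of j] True ni nth_eq_iff_index_eq[OF dL] lL by simp
              thus False using e entry True ni by simp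
            next
              case False
              hence h: "c = c' + 1" using ij cc by auto
              have "\<not> (c' \<le> i \<and> c' \<le> j)" using ij h ne by auto
              hence "(i < c' \<and> C'!i \<notin> S \<and> c' \<le> j) \<or> (j < c' \<and> C'!j \<notin> S \<and> c' \<le> i)"
                using False b \<open>\<not> (j < c' \<and> C'!j \<in> S)\<close> by auto
              thus False
              proof (elim disjE conjE)
                assume a1: "i < c'" "C'!i \<notin> S" "c' \<le> j"
                have "chat_entry S C' i \<in> R" using entry[OF a1(1,2)] Lmem rk_lt[OF a1(1,2)] by simp
                moreover have "chat_entry S C' j = Max A" using entryc a1(3) by simp
                ultimately show False using e MaxA[OF h] by simp
              next
                assume a1: "j < c'" "C'!j \<notin> S" "c' \<le> i"
                have "chat_entry S C' j \<in> R" using entry[OF a1(1,2)] Lmem rk_lt[OF a1(1,2)] by simp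
                moreover have "chat_entry S C' i = Max A" using entryc a1(3) by simp
                ultimately show False using e MaxA[OF h] by simp
              qed
            qed
          qed
        qed
      qed
    qed
    thus ?thesis by (simp add: chat_def c_def distinct_map)
  qed
  have P3: "\<forall>r j. r < j \<and> j < length (chat S C') \<and> r < length C' \<longrightarrow> chat S C' ! j \<noteq> C' ! r"
  proof (intro allI impI)
    fix r j assume h: "r < j \<and> j < length (chat S C') \<and> r < length C'"
    have jc: "j < c" using h len by simp
    have rl: "r < length C'" using h by simp
    show "chat S C' ! j \<noteq> C' ! r"
    proof (cases "j < c' \<and> C'!j \<in> S")
      case True
      have e1: "chat S C' ! j = C' ! j" using nth[OF jc] entryS[of j] True by simp
      have jl: "j < length C'" using True c'_def by simp
      have "C' ! j \<noteq> C' ! r" using nth_eq_iff_index_eq[OF assms(1) jl rl] h by simp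
      thus ?thesis using e1 by simp
    next
      case False
      have r1: "C'!r \<in> set C'" using rl by simp
      have r2: "chat S C' ! j \<in> A" using nth[OF jc] inA[OF jc False] by simp
      show ?thesis
      proof
        assume eq: "chat S C' ! j = C' ! r"
        have "chat S C' ! j \<in> set C'" using r1 unfolding eq .
        thus False using AnT[OF r2] by contradiction
      qed
    qed
  qed
  have P4: "\<forall>r < length C'. chat S C' ! r \<le> C' ! r"
  proof (intro allI impI)
    fix r assume r: "r < length C'"
    hence rc: "r < c" and rc': "r < c'" using cc c'_def by auto
    show "chat S C' ! r \<le> C' ! r"
    proof (cases "C'!r \<in> S")
      case True thus ?thesis using nth[OF rc] entryS[OF rc' True] by simp
    next
      case False thus ?thesis using nth[OF rc] entry[OF rc' False] key[OF rc' False] by simp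
    qed
  qed
  show ?thesis unfolding HHL_def by (rule conjI[OF P1 conjI[OF P2 conjI[OF assms(1) conjI[OF P3 P4]]]])
qed

end
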